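(* Every triangulated polygon $T$ with no interior vertices has a connected scaffold; consequently, $T$ has a facet path.
   Context: A triangulated polygon with no interior vertices is a finite $2$-dimensional simplicial complex homeomorphic to a closed disk all of whose vertices lie on the boundary; its triangles are called facets. The incidence graph of $T$ is the bipartite graph whose nodes are the facets and vertices of $T$, with an arc $(v,f)$ whenever $v$ is a vertex of $f$. A scaffold is a subgraph of the incidence graph containing every facet node, in which every facet node has degree exactly $2$ and at most two vertex nodes have odd degree. A facet path is a trail $(v_0,f_1,v_1,\dots,f_k,v_k)$ in the incidence graph (no arc repeated) containing every facet node exactly once (vertex nodes may repeat). *)

theory Defs
  imports "HOL-Analysis.Analysis"
begin

text \<open>A finite 2-dimensional simplicial complex is represented by its set of facets
(triangles), i.e. 3-element sets of vertices; the complex consists of all their faces.\<close>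

definition verts :: "'v set set \<Rightarrow> 'v set" where
  "verts F = \<Union>F"

definition realization :: "('v::finite) set set \<Rightarrow> (real^'v) set" where
  "realization F = (\<Union>f\<in>F. convex hull ((\<lambda>v. axis v 1) ` f))"

definition triangulated_polygon_no_interior :: "('v::finite) set set \<Rightarrow> bool" where
  "triangulated_polygon_no_interior F \<longleftrightarrow>
     finite F \<and> (\<forall>f\<in>F. card f = 3) \<and>
     (\<exists>h g. homeomorphism (realization F) (cball (0::real^2) 1) h g \<and>
            (\<forall>v\<in>verts F. h (axis v 1) \<in> sphere 0 1))"

text \<open>Nodes of the incidence graph: Inl v for a vertex, Inr f for a facet.
Arcs are pairs (v, f) with v a vertex of f.\<close>

definition incidence_arcs :: "'v set set \<Rightarrow> ('v \<times> 'v set) set" where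
  "incidence_arcs F = {(v, f). f \<in> F \<and> v \<in> f}"

definition vdeg :: "('v \<times> 'v set) set \<Rightarrow> 'v \<Rightarrow> nat" where
  "vdeg S v = card {f. (v, f) \<in> S}"

definition fdeg :: "('v \<times> 'v set) set \<Rightarrow> 'v set \<Rightarrow> nat" where
  "fdeg S f = card {v. (v, f) \<in> S}"

text \<open>A subgraph of the incidence graph is given by a set Vs of vertex nodes and a set S
of arcs whose endpoints are among its nodes; its facet nodes are all facets of F.\<close>

definition scaffold :: "'v set set \<Rightarrow> 'v set \<Rightarrow> ('v \<times> 'v set) set \<Rightarrow> bool" where
  "scaffold F Vs S \<longleftrightarrow>
     Vs \<subseteq> verts F \<and> S \<subseteq> incidence_arcs F \<and> (\<forall>(v, f)\<in>S. v \<in> Vs) \<and>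
     (\<forall>f\<in>F. fdeg S f = 2) \<and>
     card {v\<in>Vs. odd (vdeg S v)} \<le> 2"

definition subgraph_nodes :: "'v set set \<Rightarrow> 'v set \<Rightarrow> ('v + 'v set) set" where
  "subgraph_nodes F Vs = Inl ` Vs \<union> Inr ` F"

definition subgraph_edges :: "('v \<times> 'v set) set \<Rightarrow> (('v + 'v set) \<times> ('v + 'v set)) set" where
  "subgraph_edges S = {(Inl v, Inr f) | v f. (v, f) \<in> S} \<union> {(Inr f, Inl v) | v f. (v, f) \<in> S}"

definition connected_subgraph :: "'v set set \<Rightarrow> 'v set \<Rightarrow> ('v \<times> 'v set) set \<Rightarrow> bool" where
  "connected_subgraph F Vs S \<longleftrightarrow>
     (\<forall>x\<in>subgraph_nodes F Vs. \<forall>y\<in>subgraph_nodes F Vs. (x, y) \<in> (subgraph_edges S)\<^sup>*)"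

text \<open>A facet path (v_0, f_1, v_1, ..., f_k, v_k) is encoded by the list vs = [v_0,...,v_k]
and the list fs = [f_1,...,f_k]; the i-th facet is traversed via the arcs
(vs!i, fs!i) and (vs!(i+1), fs!i).\<close>

definition path_arcs :: "'v list \<Rightarrow> 'v set list \<Rightarrow> ('v \<times> 'v set) list" where
  "path_arcs vs fs = concat (map (\<lambda>i. [(vs ! i, fs ! i), (vs ! Suc i, fs ! i)]) [0..<length fs])"

definition facet_path :: "'v set set \<Rightarrow> 'v list \<Rightarrow> 'v set list \<Rightarrow> bool" where
  "facet_path F vs fs \<longleftrightarrow>
     length vs = Suc (length fs) \<and>
     set (path_arcs vs fs) \<subseteq> incidence_arcs F \<and>
     distinct (path_arcs vs fs) \<and>
     distinct fs \<and> set fs = F"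

end

theory Submission
  imports Defs
begin


fun walk :: "'v list \<Rightarrow> 'v set list \<Rightarrow> bool" where
  "walk [v] [] = True"
| "walk (v # w # vs) (f # fs) = (v \<in> f \<and> w \<in> f \<and> v \<noteq> w \<and> walk (w # vs) fs)"
| "walk _ _ = False"

lemma walk_nonempty: "walk vs fs \<Longrightarrow> vs \<noteq> []"
  by (cases vs) auto

lemma walk_append:
  "walk vs1 fs1 \<Longrightarrow> walk vs2 fs2 \<Longrightarrow> last vs1 = hd vs2 \<Longrightarrow> walk (vs1 @ tl vs2) (fs1 @ fs2)"
proof (induction vs1 fs1 rule: walk.induct)
  case (1 v)
  then show ?case using walk_nonempty[of vs2 fs2] by (cases vs2) auto
next
  case (2 v w vs f fs)
  then show ?case by auto
qed auto

lemma walk_hd_append: "walk vs1 fs1 \<Longrightarrow> hd (vs1 @ tl vs2) = hd vs1"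
  using walk_nonempty by (cases vs1) auto

lemma walk_last_append: "walk vs1 fs1 \<Longrightarrow> walk vs2 fs2 \<Longrightarrow> last vs1 = hd vs2 \<Longrightarrow>
   last (vs1 @ tl vs2) = last vs2"
  using walk_nonempty[of vs2 fs2] walk_nonempty[of vs1 fs1]
  by (cases vs2) (auto simp: last_append)

lemma walk_rev: "walk vs fs \<Longrightarrow> walk (rev vs) (rev fs)"
proof (induction vs fs rule: walk.induct)
  case (2 v w vs f fs)
  then have "walk (rev (w # vs)) (rev fs)" by auto
  moreover have "walk [w, v] [f]" using 2 by auto
  moreover have "last (rev (w # vs)) = hd [w, v]" by simp
  ultimately have "walk (rev (w # vs) @ tl [w, v]) (rev fs @ [f])" by (rule walk_append)
  then show ?case by simp
qed auto

definition tr :: "'v set set \<Rightarrow> 'v \<Rightarrow> 'v \<Rightarrow> bool" where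
  "tr X x y \<longleftrightarrow> (\<exists>vs fs. walk vs fs \<and> hd vs = x \<and> last vs = y \<and> distinct fs \<and> set fs = X)"

lemma tr_empty: "tr {} x x"
  unfolding tr_def by (rule exI[of _ "[x]"], rule exI[of _ "[]"]) simp

lemma tr_single: "x \<in> f \<Longrightarrow> y \<in> f \<Longrightarrow> x \<noteq> y \<Longrightarrow> tr {f} x y"
  unfolding tr_def by (rule exI[of _ "[x,y]"], rule exI[of _ "[f]"]) simp

lemma tr_rev: "tr X x y \<Longrightarrow> tr X y x"
  unfolding tr_def
proof (elim exE conjE)
  fix vs fs assume h: "walk vs fs" "hd vs = x" "last vs = y" "distinct fs" "set fs = X"
  then show "\<exists>vs fs. walk vs fs \<and> hd vs = y \<and> last vs = x \<and> distinct fs \<and> set fs = X"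
    using walk_nonempty[OF h(1)]
    by (intro exI[of _ "rev vs"] exI[of _ "rev fs"]) (auto simp: walk_rev hd_rev last_rev)
qed

lemma tr_cat: "tr X x y \<Longrightarrow> tr Y y z \<Longrightarrow> X \<inter> Y = {} \<Longrightarrow> tr (X \<union> Y) x z"
  unfolding tr_def
proof (elim exE conjE)
  fix vs fs vs' fs'
  assume h: "walk vs fs" "hd vs = x" "last vs = y" "distinct fs" "set fs = X"
    and h': "walk vs' fs'" "hd vs' = y" "last vs' = z" "distinct fs'" "set fs' = Y"
    and d: "X \<inter> Y = {}"
  show "\<exists>vs fs. walk vs fs \<and> hd vs = x \<and> last vs = z \<and> distinct fs \<and> set fs = X \<union> Y"
    apply (intro exI[of _ "vs @ tl vs'"] exI[of _ "fs @ fs'"])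
    using h(2,3,4,5) h'(2,3,4,5) d walk_append[OF h(1) h'(1)] walk_hd_append[OF h(1)] walk_last_append[OF h(1) h'(1)]
    by (simp add: set_eq_iff disjoint_iff)
qed

definition splt :: "'v set set \<Rightarrow> 'v \<Rightarrow> 'v \<Rightarrow> bool" where
  "splt X x y \<longleftrightarrow> (\<exists>X1 X2. X1 \<inter> X2 = {} \<and> X = X1 \<union> X2 \<and> tr X1 x y \<and> tr X2 x y)"

definition good :: "'v set set \<Rightarrow> 'v \<Rightarrow> 'v \<Rightarrow> bool" where
  "good X x y \<longleftrightarrow> tr X x y \<or> splt X x y"

definition bund :: "'v set set \<Rightarrow> 'v \<Rightarrow> 'v \<Rightarrow> bool" where
  "bund X x y \<longleftrightarrow> X = {} \<or> good X x y"

lemma splt_sym: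
  assumes "splt X x y" shows "splt X y x"
proof -
  obtain X1 X2 where h: "X1 \<inter> X2 = {}" "X = X1 \<union> X2" "tr X1 x y" "tr X2 x y"
    using assms unfolding splt_def by blast
  show ?thesis unfolding splt_def
    using h(1,2) tr_rev[OF h(3)] tr_rev[OF h(4)] by blast
qed

lemma good_sym: "good X x y \<Longrightarrow> good X y x"
  unfolding good_def using tr_rev[of X x y] splt_sym[of X x y] by blast

lemma bund_sym: "bund X x y \<Longrightarrow> bund X y x"
  unfolding bund_def using good_sym[of X x y] by blast

lemma splt_loop: "splt S p q \<Longrightarrow> tr S p p"
  unfolding splt_def
proof (elim exE conjE)
  fix X1 X2 assume "X1 \<inter> X2 = {}" "S = X1 \<union> X2" "tr X1 p q" "tr X2 p q"
  then show "tr S p p" using tr_cat[of X1 p q X2 p] tr_rev[of X2 p q] by auto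
qed

lemma bund_add:
  assumes "bund X x y" "good Y x y" "X \<inter> Y = {}"
  shows "good (X \<union> Y) x y"
proof -
  consider "X = {}" | "tr X x y" | "splt X x y" using assms(1) unfolding bund_def good_def by blast
  then show ?thesis
  proof cases
    case 1 then show ?thesis using assms by simp
  next
    case 2
    consider "tr Y x y" | "splt Y x y" using assms(2) unfolding good_def by blast
    then show ?thesis
    proof cases
      case 1 then show ?thesis using 2 assms(3) unfolding good_def splt_def by blast
    next
      case 3: 2
      then obtain Y1 Y2 where y: "Y1 \<inter> Y2 = {}" "Y = Y1 \<union> Y2" "tr Y1 x y" "tr Y2 x y"
        unfolding splt_def by blast
      have "tr (X \<union> Y1) x x" using tr_cat[OF 2 tr_rev[OF y(3)]] y assms(3) by auto
      then have "tr ((X \<union> Y1) \<union> Y2) x y" using tr_cat[OF _ y(4)] y assms(3) by auto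
      then show ?thesis unfolding good_def using y by (simp add: Un_assoc)
    qed
  next
    case 3
    then obtain X1 X2 where x: "X1 \<inter> X2 = {}" "X = X1 \<union> X2" "tr X1 x y" "tr X2 x y"
      unfolding splt_def by blast
    consider "tr Y x y" | "splt Y x y" using assms(2) unfolding good_def by blast
    then show ?thesis
    proof cases
      case 1
      have "tr (X1 \<union> X2) x x" using tr_cat[OF x(3) tr_rev[OF x(4)]] x by auto
      then have "tr ((X1 \<union> X2) \<union> Y) x y" using tr_cat[OF _ 1] x assms(3) by auto
      then show ?thesis unfolding good_def using x by simp
    next
      case 2
      then obtain Y1 Y2 where y: "Y1 \<inter> Y2 = {}" "Y = Y1 \<union> Y2" "tr Y1 x y" "tr Y2 x y"
        unfolding splt_def by blast
      have "tr (X1 \<union> Y1) x x" using tr_cat[OF x(3) tr_rev[OF y(3)]] y x assms(3) by auto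
      moreover have "(X1 \<union> Y1) \<inter> X2 = {}" using x y assms(3) by auto
      ultimately have "tr ((X1 \<union> Y1) \<union> X2) x y" using tr_cat[OF _ x(4)] by blast
      moreover have "((X1 \<union> Y1) \<union> X2) \<inter> Y2 = {}" using x y assms(3) by auto
      ultimately have "splt (X \<union> Y) x y" unfolding splt_def using x y
        by (intro exI[of _ "(X1 \<union> Y1) \<union> X2"] exI[of _ Y2]) (auto simp: y(4))
      then show ?thesis unfolding good_def by simp
    qed
  qed
qed



lemma path_arcs_Nil: "path_arcs [v] [] = []"
  unfolding path_arcs_def by simp

lemma path_arcs_Cons: "path_arcs (v # w # vs) (f # fs) = (v, f) # (w, f) # path_arcs (w # vs) fs"
proof -
  have "[0..<length (f # fs)] = 0 # map Suc [0..<length fs]"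
    by (simp add: upt_conv_Cons map_Suc_upt del: upt_Suc)
  then show ?thesis unfolding path_arcs_def by (simp add: comp_def)
qed

lemma walk_len: "walk vs fs \<Longrightarrow> length vs = Suc (length fs)"
  by (induction vs fs rule: walk.induct) auto

lemma walk_arcs_inc: "walk vs fs \<Longrightarrow> set (path_arcs vs fs) \<subseteq> {(v, f). f \<in> set fs \<and> v \<in> f}"
  by (induction vs fs rule: walk.induct) (auto simp: path_arcs_Nil path_arcs_Cons)

lemma walk_arcs_fst: "walk vs fs \<Longrightarrow> fst ` set (path_arcs vs fs) \<subseteq> set vs"
  by (induction vs fs rule: walk.induct) (auto simp: path_arcs_Nil path_arcs_Cons)

lemma walk_arcs_distinct: "walk vs fs \<Longrightarrow> distinct fs \<Longrightarrow> distinct (path_arcs vs fs)"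
proof (induction vs fs rule: walk.induct)
  case (2 v w vs f fs)
  have "f \<notin> set fs" using 2 by simp
  then have "(v, f) \<notin> set (path_arcs (w # vs) fs)" "(w, f) \<notin> set (path_arcs (w # vs) fs)"
    using walk_arcs_inc[of "w # vs" fs] 2 by auto
  then show ?case using 2 by (auto simp: path_arcs_Cons)
qed (auto simp: path_arcs_Nil)

lemma walk_facet_path:
  assumes "walk vs fs" "distinct fs" "set fs = F"
  shows "facet_path F vs fs"
  unfolding facet_path_def incidence_arcs_def
  using assms walk_len walk_arcs_inc[OF assms(1)] walk_arcs_distinct by blast

lemma walk_verts: "walk vs fs \<Longrightarrow> fs \<noteq> [] \<Longrightarrow> set vs \<subseteq> \<Union>(set fs)"
proof (induction vs fs rule: walk.induct)
  case (2 v w vs f fs)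
  show ?case
  proof (cases "fs = []")
    case True
    then have "vs = []" using 2 by (cases vs) auto
    then show ?thesis using 2 True by auto
  next
    case False
    then show ?thesis using 2 by auto
  qed
qed auto

lemma walk_fdeg: "walk vs fs \<Longrightarrow> distinct fs \<Longrightarrow> f \<in> set fs \<Longrightarrow> fdeg (set (path_arcs vs fs)) f = 2"
proof (induction vs fs rule: walk.induct)
  case (2 v w vs f' fs)
  have nf: "f' \<notin> set fs" using 2 by simp
  have rest: "{u. (u, f') \<in> set (path_arcs (w # vs) fs)} = {}"
    using walk_arcs_inc[of "w # vs" fs] 2 nf by auto
  show ?case
  proof (cases "f = f'")
    case True
    have "{u. (u, f) \<in> set (path_arcs (v # w # vs) (f' # fs))} = {v, w}"
      using rest True by (auto simp: path_arcs_Cons)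
    then show ?thesis unfolding fdeg_def using 2 by simp
  next
    case False
    then have "{u. (u, f) \<in> set (path_arcs (v # w # vs) (f' # fs))} = {u. (u, f) \<in> set (path_arcs (w # vs) fs)}"
      by (auto simp: path_arcs_Cons)
    then show ?thesis unfolding fdeg_def using 2 False by (simp add: fdeg_def)
  qed
qed auto

lemma walk_vdeg: "walk vs fs \<Longrightarrow> distinct fs \<Longrightarrow>
   odd (vdeg (set (path_arcs vs fs)) u) \<longleftrightarrow> (u = hd vs) \<noteq> (u = last vs)"
proof (induction vs fs rule: walk.induct)
  case (1 v)
  then show ?case by (simp add: vdeg_def path_arcs_Nil)
next
  case (2 v w vs f fs)
  have nf: "f \<notin> set fs" using 2 by simp
  have rest: "(u, f) \<notin> set (path_arcs (w # vs) fs)"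
    using walk_arcs_inc[of "w # vs" fs] 2 nf by auto
  have fin: "finite {g. (u, g) \<in> set (path_arcs (w # vs) fs)}"
  proof -
    have "{g. (u, g) \<in> set (path_arcs (w # vs) fs)} \<subseteq> snd ` set (path_arcs (w # vs) fs)"
      by force
    then show ?thesis using finite_subset by blast
  qed
  have eq: "{g. (u, g) \<in> set (path_arcs (v # w # vs) (f # fs))} =
     (if u = v \<or> u = w then insert f {g. (u, g) \<in> set (path_arcs (w # vs) fs)}
      else {g. (u, g) \<in> set (path_arcs (w # vs) fs)})"
    by (auto simp: path_arcs_Cons)
  have "vdeg (set (path_arcs (v # w # vs) (f # fs))) u =
     (if u = v \<or> u = w then Suc (vdeg (set (path_arcs (w # vs) fs)) u) else vdeg (set (path_arcs (w # vs) fs)) u)"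
    unfolding vdeg_def eq using fin rest by auto
  moreover have "odd (vdeg (set (path_arcs (w # vs) fs)) u) \<longleftrightarrow> (u = w) \<noteq> (u = last (w # vs))"
    using 2 by simp
  moreover have "v \<noteq> w" using 2 by simp
  ultimately show ?case by auto
qed auto

lemma subgraph_edges_mono: "S \<subseteq> S' \<Longrightarrow> subgraph_edges S \<subseteq> subgraph_edges S'"
  unfolding subgraph_edges_def by blast

lemma subgraph_edges_sym: "(x, y) \<in> (subgraph_edges S)\<^sup>* \<Longrightarrow> (y, x) \<in> (subgraph_edges S)\<^sup>*"
proof -
  have "converse (subgraph_edges S) = subgraph_edges S" unfolding subgraph_edges_def by blast
  then show "(x, y) \<in> (subgraph_edges S)\<^sup>* \<Longrightarrow> (y, x) \<in> (subgraph_edges S)\<^sup>*"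
    by (metis converseD rtrancl_converseI)
qed

lemma walk_conn: "walk vs fs \<Longrightarrow>
  \<forall>x\<in>Inl ` set vs \<union> Inr ` set fs. (Inl (hd vs), x) \<in> (subgraph_edges (set (path_arcs vs fs)))\<^sup>*"
proof (induction vs fs rule: walk.induct)
  case (2 v w vs f fs)
  define E where "E = subgraph_edges (set (path_arcs (v # w # vs) (f # fs)))"
  define E' where "E' = subgraph_edges (set (path_arcs (w # vs) fs))"
  have sub: "E' \<subseteq> E" unfolding E_def E'_def
    by (rule subgraph_edges_mono) (auto simp: path_arcs_Cons)
  have e1: "(Inl v, Inr f) \<in> E" unfolding E_def subgraph_edges_def by (auto simp: path_arcs_Cons)
  have e2: "(Inr f, Inl w) \<in> E" unfolding E_def subgraph_edges_def by (auto simp: path_arcs_Cons)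
  have IH: "\<forall>x\<in>Inl ` set (w # vs) \<union> Inr ` set fs. (Inl w, x) \<in> E\<^sup>*"
    using 2 rtrancl_mono[OF sub] unfolding E'_def by auto
  have vw: "(Inl v, Inl w) \<in> E\<^sup>*" using e1 e2 by auto
  show ?case unfolding E_def[symmetric]
  proof
    fix x assume x: "x \<in> Inl ` set (v # w # vs) \<union> Inr ` set (f # fs)"
    consider "x = Inl v" | "x = Inr f" | "x \<in> Inl ` set (w # vs) \<union> Inr ` set fs" using x by auto
    then show "(Inl (hd (v # w # vs)), x) \<in> E\<^sup>*"
    proof cases
      case 3 then show ?thesis using IH vw by (auto intro: rtrancl_trans)
    qed (use e1 in auto)
  qed
qed auto

lemma walk_scaffold:
  assumes "walk vs fs" "distinct fs" "set fs = F" "F \<noteq> {}"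
  shows "scaffold F (set vs) (set (path_arcs vs fs)) \<and> connected_subgraph F (set vs) (set (path_arcs vs fs))"
proof -
  have "fs \<noteq> []" using assms by auto
  then have vs: "set vs \<subseteq> verts F" using walk_verts[OF assms(1)] assms(3) unfolding verts_def by simp
  have inc: "set (path_arcs vs fs) \<subseteq> incidence_arcs F"
    using walk_arcs_inc[OF assms(1)] assms(3) unfolding incidence_arcs_def by auto
  have fst: "\<forall>(v, f)\<in>set (path_arcs vs fs). v \<in> set vs"
    using walk_arcs_fst[OF assms(1)] by force
  have fd: "\<forall>f\<in>F. fdeg (set (path_arcs vs fs)) f = 2"
    using walk_fdeg[OF assms(1,2)] assms(3) by simp
  have "{v\<in>set vs. odd (vdeg (set (path_arcs vs fs)) v)} \<subseteq> {hd vs, last vs}"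
    using walk_vdeg[OF assms(1,2)] by auto
  moreover have "card {hd vs, last vs} \<le> 2" by (cases "hd vs = last vs") auto
  ultimately have od: "card {v\<in>set vs. odd (vdeg (set (path_arcs vs fs)) v)} \<le> 2"
    using card_mono[of "{hd vs, last vs}"] by (meson finite.emptyI finite.insertI le_trans)
  have conn: "connected_subgraph F (set vs) (set (path_arcs vs fs))"
    unfolding connected_subgraph_def subgraph_nodes_def
  proof (intro ballI)
    fix x y assume "x \<in> Inl ` set vs \<union> Inr ` F" "y \<in> Inl ` set vs \<union> Inr ` F"
    then have "(Inl (hd vs), x) \<in> (subgraph_edges (set (path_arcs vs fs)))\<^sup>*"
      "(Inl (hd vs), y) \<in> (subgraph_edges (set (path_arcs vs fs)))\<^sup>*"
      using walk_conn[OF assms(1)] assms(3) by auto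
    then show "(x, y) \<in> (subgraph_edges (set (path_arcs vs fs)))\<^sup>*"
      using subgraph_edges_sym by (blast intro: rtrancl_trans)
  qed
  show ?thesis unfolding scaffold_def using vs inc fst fd od conn by blast
qed



lemma absorb:
  assumes "good W a b" "tr L z z" "z = a \<or> z = b" "W \<inter> L = {}"
  shows "good (W \<union> L) a b"
proof -
  consider "tr W a b" | "splt W a b" using assms(1) unfolding good_def by blast
  then show ?thesis
  proof cases
    case 1
    show ?thesis
    proof (cases "z = a")
      case True
      have "tr (L \<union> W) a b" using tr_cat[of L a a W b] assms(2,4) 1 True by (simp add: Int_commute)
      then show ?thesis unfolding good_def by (simp add: Un_commute)
    next
      case False
      then have "z = b" using assms(3) by simp
      then have "tr (W \<union> L) a b" using tr_cat[of W a b L b] assms(2,4) 1 by simp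
      then show ?thesis unfolding good_def by simp
    qed
  next
    case 2
    then obtain W1 W2 where w: "W1 \<inter> W2 = {}" "W = W1 \<union> W2" "tr W1 a b" "tr W2 a b"
      unfolding splt_def by blast
    show ?thesis
    proof (cases "z = a")
      case True
      have d: "L \<inter> W1 = {}" using assms(4) w(2) by auto
      have "tr (L \<union> W1) a b" using tr_cat[OF _ w(3) d] assms(2) True by simp
      moreover have "(L \<union> W1) \<inter> W2 = {}" using assms(4) w by auto
      moreover have "W \<union> L = (L \<union> W1) \<union> W2" using w by auto
      ultimately have "splt (W \<union> L) a b" unfolding splt_def using w(4) by blast
      then show ?thesis unfolding good_def by simp
    next
      case False
      then have zb: "z = b" using assms(3) by simp
      have d: "W1 \<inter> L = {}" using assms(4) w(2) by auto
      have "tr (W1 \<union> L) a b" using tr_cat[OF w(3) _ d] assms(2) zb by simp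
      moreover have "(W1 \<union> L) \<inter> W2 = {}" using assms(4) w by auto
      moreover have "W \<union> L = (W1 \<union> L) \<union> W2" using w by auto
      ultimately have "splt (W \<union> L) a b" unfolding splt_def using w(4) by blast
      then show ?thesis unfolding good_def by simp
    qed
  qed
qed

definition opt :: "'v set set \<Rightarrow> 'v \<Rightarrow> 'v \<Rightarrow> bool" where
  "opt X x y \<longleftrightarrow> X = {} \<or> tr X x y"

lemma core:
  assumes r: "a \<in> r" "b \<in> r" "c \<in> r" "a \<noteq> b" "b \<noteq> c" "a \<noteq> c"
    and o: "opt X a b" "opt Y b c" "opt Z c a"
    and d: "X \<inter> Y = {}" "Y \<inter> Z = {}" "X \<inter> Z = {}" "r \<notin> X" "r \<notin> Y" "r \<notin> Z"
  shows "good ({r} \<union> X \<union> Y \<union> Z) a b"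
proof -
  have R: "tr {r} x y" if "x \<in> r" "y \<in> r" "x \<noteq> y" for x y using tr_single that .
  have dr: "{r} \<inter> X = {}" "{r} \<inter> Y = {}" "{r} \<inter> Z = {}" using d by auto
  consider (n) "X = {}" "Y = {}" "Z = {}"
    | (x) "tr X a b" "Y = {}" "Z = {}"
    | (y) "X = {}" "tr Y b c" "Z = {}"
    | (z) "X = {}" "Y = {}" "tr Z c a"
    | (xy) "tr X a b" "tr Y b c" "Z = {}"
    | (xz) "tr X a b" "Y = {}" "tr Z c a"
    | (yz) "X = {}" "tr Y b c" "tr Z c a"
    | (xyz) "tr X a b" "tr Y b c" "tr Z c a"
    using o unfolding opt_def by blast
  then show ?thesis
  proof cases
    case n
    then show ?thesis unfolding good_def using R r by simp
  next
    case x
    have "splt ({r} \<union> X) a b" unfolding splt_def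
      using dr x R[of a b] r by blast
    then show ?thesis unfolding good_def using x by simp
  next
    case y
    have "tr ({r} \<union> Y) a b" using tr_cat[OF R[of a c] tr_rev[OF y(2)]] dr r by simp
    then show ?thesis unfolding good_def using y by simp
  next
    case z
    have "tr (Z \<union> {r}) a b" using tr_cat[OF tr_rev[OF z(3)] R[of c b]] dr r by (simp add: Int_commute)
    then show ?thesis unfolding good_def using z by (simp add: Un_commute)
  next
    case xy
    have "tr (X \<union> Y) a c" using tr_cat[OF xy(1) xy(2)] d by simp
    then have "tr ((X \<union> Y) \<union> {r}) a b" using tr_cat[OF _ R[of c b]] dr r by auto
    then show ?thesis unfolding good_def using xy by (simp add: Un_commute Un_assoc insert_commute)
  next
    case xz
    have "tr (Z \<union> {r}) a b" using tr_cat[OF tr_rev[OF xz(3)] R[of c b]] dr r by (simp add: Int_commute)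
    moreover have "X \<inter> (Z \<union> {r}) = {}" using d by auto
    ultimately have "splt ({r} \<union> X \<union> Y \<union> Z) a b" unfolding splt_def using xz(1,2)
      by (intro exI[of _ X] exI[of _ "Z \<union> {r}"]) auto
    then show ?thesis unfolding good_def by simp
  next
    case yz
    have "tr (Z \<union> Y) a b" using tr_cat[OF tr_rev[OF yz(3)] tr_rev[OF yz(2)]] d by (simp add: Int_commute)
    moreover have "{r} \<inter> (Z \<union> Y) = {}" using d by auto
    ultimately have "splt ({r} \<union> X \<union> Y \<union> Z) a b" unfolding splt_def using yz(1) R[of a b] r
      by (intro exI[of _ "{r}"] exI[of _ "Z \<union> Y"]) auto
    then show ?thesis unfolding good_def by simp
  next
    case xyz
    have "tr (X \<union> Y) a c" using tr_cat[OF xyz(1) xyz(2)] d by simp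
    moreover have "(X \<union> Y) \<inter> Z = {}" using d by auto
    ultimately have "tr ((X \<union> Y) \<union> Z) a a" using tr_cat[OF _ xyz(3)] by blast
    then have "tr (((X \<union> Y) \<union> Z) \<union> {r}) a b" using tr_cat[OF _ R[of a b]] dr r by auto
    then show ?thesis unfolding good_def by (simp add: Un_commute Un_left_commute Un_assoc)
  qed
qed

lemma bund_reduce:
  assumes "bund X p q"
  obtains X' where "opt X' p q" "X' = X \<or> (X' = {} \<and> tr X p p \<and> tr X q q)"
proof -
  consider "X = {}" | "tr X p q" | "splt X p q" using assms unfolding bund_def good_def by blast
  then show ?thesis
  proof cases
    case 1 then show ?thesis using that[of X] unfolding opt_def by simp
  next
    case 2 then show ?thesis using that[of X] unfolding opt_def by simp
  next
    case 3
    have "tr X p p" "tr X q q" using splt_loop[OF 3] splt_loop[OF splt_sym[OF 3]] by auto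
    then show ?thesis using that[of "{}"] unfolding opt_def by simp
  qed
qed

lemma absorb_opt:
  assumes "good (W \<union> X') a b" "X' = X \<or> (X' = {} \<and> tr X z z)" "z = a \<or> z = b" "W \<inter> X = {}"
  shows "good (W \<union> X) a b"
  using assms absorb[of W a b X z] by auto

lemma assemble:
  assumes r: "a \<in> r" "b \<in> r" "c \<in> r" "a \<noteq> b" "b \<noteq> c" "a \<noteq> c"
    and o: "bund X a b" "bund Y b c" "bund Z c a"
    and d: "X \<inter> Y = {}" "Y \<inter> Z = {}" "X \<inter> Z = {}" "r \<notin> X" "r \<notin> Y" "r \<notin> Z"
  shows "good ({r} \<union> X \<union> Y \<union> Z) a b"
proof -
  obtain X' where x: "opt X' a b" "X' = X \<or> (X' = {} \<and> tr X a a \<and> tr X b b)"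
    using bund_reduce[OF o(1)] by blast
  obtain Y' where y: "opt Y' b c" "Y' = Y \<or> (Y' = {} \<and> tr Y b b \<and> tr Y c c)"
    using bund_reduce[OF o(2)] by blast
  obtain Z' where z: "opt Z' c a" "Z' = Z \<or> (Z' = {} \<and> tr Z c c \<and> tr Z a a)"
    using bund_reduce[OF o(3)] by blast
  have sub: "X' \<subseteq> X" "Y' \<subseteq> Y" "Z' \<subseteq> Z" using x y z by auto
  have g0: "good ({r} \<union> X' \<union> Y' \<union> Z') a b"
    using core[OF r x(1) y(1) z(1)] d sub by blast
  have d1: "({r} \<union> X' \<union> Y') \<inter> Z = {}" using d sub by auto
  have z2: "Z' = Z \<or> (Z' = {} \<and> tr Z a a)" using z(2) by auto
  have g1: "good (({r} \<union> X' \<union> Y') \<union> Z) a b"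
    by (rule absorb_opt[of "{r} \<union> X' \<union> Y'" Z' a b Z a, OF _ z2 _ d1]) (use g0 in \<open>auto simp: Un_ac\<close>)
  have d2: "({r} \<union> X' \<union> Z) \<inter> Y = {}" using d sub by auto
  have y2: "Y' = Y \<or> (Y' = {} \<and> tr Y b b)" using y(2) by auto
  have g2: "good (({r} \<union> X' \<union> Z) \<union> Y) a b"
    by (rule absorb_opt[of "{r} \<union> X' \<union> Z" Y' a b Y b, OF _ y2 _ d2]) (use g1 in \<open>auto simp: Un_ac\<close>)
  have d3: "({r} \<union> Y \<union> Z) \<inter> X = {}" using d sub by auto
  have x2: "X' = X \<or> (X' = {} \<and> tr X a a)" using x(2) by auto
  have g3: "good (({r} \<union> Y \<union> Z) \<union> X) a b"
    by (rule absorb_opt[of "{r} \<union> Y \<union> Z" X' a b X a, OF _ x2 _ d3]) (use g2 in \<open>auto simp: Un_ac\<close>)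
  then show ?thesis by (simp add: Un_ac)
qed



definition adjR :: "'v set set \<Rightarrow> ('v set \<times> 'v set) set" where
  "adjR T = {(f, g). f \<in> T \<and> g \<in> T \<and> card (f \<inter> g) = 2}"

definition sconn :: "'v set set \<Rightarrow> bool" where
  "sconn T \<longleftrightarrow> (\<forall>f\<in>T. \<forall>g\<in>T. (f, g) \<in> (adjR T)\<^sup>*)"

lemma adjR_sym: "converse (adjR T) = adjR T"
  unfolding adjR_def by (auto simp: Int_commute)

lemma adjR_rtrancl_sym: "(f, g) \<in> (adjR T)\<^sup>* \<Longrightarrow> (g, f) \<in> (adjR T)\<^sup>*"
  by (metis adjR_sym converseD rtrancl_converseI)

lemma adjR_rtrancl_mem: "(f, g) \<in> (adjR T)\<^sup>* \<Longrightarrow> f \<in> T \<Longrightarrow> g \<in> T"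
  by (induction rule: rtrancl_induct) (auto simp: adjR_def)

lemma bund_fold:
  assumes "finite CC" "\<forall>S\<in>CC. good S p q" "\<forall>S\<in>CC. \<forall>S'\<in>CC. S \<noteq> S' \<longrightarrow> S \<inter> S' = {}"
  shows "bund (\<Union>CC) p q"
  using assms
proof (induction CC rule: finite_induct)
  case empty
  then show ?case unfolding bund_def by simp
next
  case (insert S CC)
  have p1: "\<forall>S\<in>CC. good S p q" using insert.prems(1) by simp
  have p2: "\<forall>S\<in>CC. \<forall>S'\<in>CC. S \<noteq> S' \<longrightarrow> S \<inter> S' = {}" using insert.prems(2) by simp
  have b: "bund (\<Union>CC) p q" using insert.IH[OF p1 p2] .
  have g: "good S p q" using insert.prems(1) by simp
  have "S' \<inter> S = {}" if "S' \<in> CC" for S'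
  proof -
    have "S' \<noteq> S" using that insert.hyps(2) by auto
    then show ?thesis using insert.prems(2) that by simp
  qed
  then have d: "\<Union>CC \<inter> S = {}" by auto
  have "good (\<Union>CC \<union> S) p q" using bund_add[OF b g d] .
  then show ?case unfolding bund_def by (simp add: Un_commute)
qed

lemma card3_third:
  assumes "card r = 3" "a \<in> r" "b \<in> r" "a \<noteq> b"
  obtains c where "r = {a, b, c}" "c \<noteq> a" "c \<noteq> b"
proof -
  have "card (r - {a, b}) = 1" using assms by (simp add: card_Diff_subset)
  then obtain c where c: "r - {a, b} = {c}" by (auto simp: card_Suc_eq)
  then have "r = {a, b, c}" using assms by blast
  moreover have "c \<noteq> a" "c \<noteq> b" using c by auto
  ultimately show ?thesis using that by blast
qed

lemma edge_cases:
  assumes "r = {a, b, c}" "a \<noteq> b" "b \<noteq> c" "a \<noteq> c" "e \<subseteq> r" "card e = 2"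
  shows "e = {a, b} \<or> e = {b, c} \<or> e = {c, a}"
proof -
  have "finite e" using assms(6) card.infinite by fastforce
  then obtain x y where xy: "e = {x, y}" "x \<noteq> y" using assms(6) by (auto simp: card_Suc_eq numeral_2_eq_2)
  then show ?thesis using assms(1-5) by auto
qed

lemma main_good:
  assumes "finite T" "\<forall>f\<in>T. card f = 3" "sconn T" "r \<in> T" "a \<in> r" "b \<in> r" "a \<noteq> b"
  shows "good T a b"
  using assms
proof (induction "card T" arbitrary: T r a b rule: less_induct)
  case less
  note fin = less.prems(1) and c3 = less.prems(2) and sc = less.prems(3) and rT = less.prems(4)
  obtain c where rc: "r = {a, b, c}" "c \<noteq> a" "c \<noteq> b"
    using card3_third[of r a b] c3 rT less.prems(5-7) by blast
  define T' where "T' = T - {r}"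
  define R where "R = adjR T'"
  define comp where "comp f = {g. (f, g) \<in> R\<^sup>*}" for f
  define C where "C = comp ` T'"
  have Rsym: "(f, g) \<in> R\<^sup>* \<Longrightarrow> (g, f) \<in> R\<^sup>*" for f g
    unfolding R_def by (rule adjR_rtrancl_sym)
  have compT': "comp f \<subseteq> T'" if "f \<in> T'" for f
    using adjR_rtrancl_mem[of f _ T'] that unfolding comp_def R_def by blast
  have self: "f \<in> comp f" for f unfolding comp_def by simp
  have comp_eq: "comp f = comp g" if "(f, g) \<in> R\<^sup>*" for f g
  proof -
    have gf: "(g, f) \<in> R\<^sup>*" using Rsym that .
    have "x \<in> comp g" if "x \<in> comp f" for x
      using that gf rtrancl_trans[of g f R x] unfolding comp_def by simp
    moreover have "x \<in> comp f" if "x \<in> comp g" for x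
      using that \<open>(f, g) \<in> R\<^sup>*\<close> rtrancl_trans[of f g R x] unfolding comp_def by simp
    ultimately show ?thesis by blast
  qed
  have disj: "\<forall>S\<in>C. \<forall>S'\<in>C. S \<noteq> S' \<longrightarrow> S \<inter> S' = {}"
  proof (intro ballI impI)
    fix S S' assume "S \<in> C" "S' \<in> C" "S \<noteq> S'"
    then obtain f f' where ff: "S = comp f" "S' = comp f'" unfolding C_def by blast
    show "S \<inter> S' = {}"
    proof (rule ccontr)
      assume "S \<inter> S' \<noteq> {}"
      then obtain g where "(f, g) \<in> R\<^sup>*" "(f', g) \<in> R\<^sup>*" using ff unfolding comp_def by blast
      then have "comp f = comp g" "comp f' = comp g" using comp_eq by blast+
      then show False using ff \<open>S \<noteq> S'\<close> by simp
    qed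
  qed
  have UC: "\<Union>C = T'" unfolding C_def using compT' self by blast
  have finC: "finite C" unfolding C_def T'_def using fin by simp
  have sconnS: "sconn S" if SC: "S \<in> C" for S
  proof -
    obtain f where f: "f \<in> T'" "S = comp f" using SC unfolding C_def by blast
    have key: "(x, y) \<in> (adjR S)\<^sup>*" if "(x, y) \<in> R\<^sup>*" "x \<in> S" for x y
      using that
    proof (induction rule: rtrancl_induct)
      case base then show ?case by simp
    next
      case (step y z)
      have "(x, y) \<in> (adjR S)\<^sup>*" using step by blast
      have fx: "(f, x) \<in> R\<^sup>*" using step(4) f(2) unfolding comp_def by simp
      have fy: "(f, y) \<in> R\<^sup>*" using rtrancl_trans[OF fx step(1)] .
      have fz: "(f, z) \<in> R\<^sup>*" using rtrancl_into_rtrancl[OF fy step(2)] .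
      moreover have "y \<in> S" using fy f(2) unfolding comp_def by simp
      moreover have "z \<in> S" using fz f(2) unfolding comp_def by simp
      moreover have "card (y \<inter> z) = 2" using step(2) unfolding R_def adjR_def by simp
      ultimately have "(y, z) \<in> adjR S" unfolding adjR_def by simp
      with \<open>(x, y) \<in> (adjR S)\<^sup>*\<close> show ?case by (rule rtrancl_into_rtrancl)
    qed
    show ?thesis unfolding sconn_def
    proof (intro ballI)
      fix g h assume "g \<in> S" "h \<in> S"
      then have "(f, g) \<in> R\<^sup>*" "(f, h) \<in> R\<^sup>*" using f unfolding comp_def by auto
      then have "(g, h) \<in> R\<^sup>*" using Rsym[of f g] rtrancl_trans[of g f R h] by simp
      then show "(g, h) \<in> (adjR S)\<^sup>*" using key \<open>g \<in> S\<close> by blast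
    qed
  qed
  have attach: "\<exists>g\<in>S. card (g \<inter> r) = 2" if SC: "S \<in> C" for S
  proof -
    obtain f where f: "f \<in> T'" "S = comp f" using SC unfolding C_def by blast
    have fr: "(f, r) \<in> (adjR T)\<^sup>*" using sc f(1) rT unfolding sconn_def T'_def by blast
    have "x \<in> T' \<longrightarrow> (\<exists>g. (x, g) \<in> R\<^sup>* \<and> card (g \<inter> r) = 2)" if "(x, r) \<in> (adjR T)\<^sup>*" for x
      using that
    proof (induction rule: converse_rtrancl_induct)
      case base then show ?case unfolding T'_def by simp
    next
      case (step x y)
      show ?case
      proof
        assume xT: "x \<in> T'"
        show "\<exists>g. (x, g) \<in> R\<^sup>* \<and> card (g \<inter> r) = 2"
        proof (cases "y = r")
          case True
          then show ?thesis using step(1) unfolding adjR_def by auto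
        next
          case False
          then have yT: "y \<in> T'" using step(1) unfolding adjR_def T'_def by auto
          then obtain g where "(y, g) \<in> R\<^sup>*" "card (g \<inter> r) = 2" using step by blast
          moreover have "(x, y) \<in> R" using step(1) xT yT unfolding R_def adjR_def by auto
          ultimately show ?thesis by (blast intro: converse_rtrancl_into_rtrancl)
        qed
      qed
    qed
    then obtain g where "(f, g) \<in> R\<^sup>*" "card (g \<inter> r) = 2" using fr f(1) by blast
    then show ?thesis using f unfolding comp_def by blast
  qed
  define e where "e S = (SOME e. \<exists>g\<in>S. e = g \<inter> r \<and> card e = 2)" for S
  have e_prop: "\<exists>g\<in>S. e S = g \<inter> r \<and> card (e S) = 2" if "S \<in> C" for S
  proof -
    have "\<exists>e. \<exists>g\<in>S. e = g \<inter> r \<and> card e = 2" using attach[OF that] by blast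
    then show ?thesis unfolding e_def by (rule someI_ex)
  qed
  have abc: "a \<noteq> b" "b \<noteq> c" "a \<noteq> c" using rc less.prems(7) by auto
  have e_cases: "e S = {a, b} \<or> e S = {b, c} \<or> e S = {c, a}" if "S \<in> C" for S
    using e_prop[OF that] edge_cases[OF rc(1) abc] by blast
  have SC_props: "finite S \<and> (\<forall>f\<in>S. card f = 3) \<and> card S < card T" if "S \<in> C" for S
  proof -
    have "S \<subseteq> T'" using UC that by blast
    then have "S \<subset> T" unfolding T'_def using rT by blast
    moreover have "finite S" using \<open>S \<subset> T\<close> fin finite_subset by blast
    ultimately show ?thesis using fin c3 psubset_card_mono[of T S] by blast
  qed
  have goodS: "good S p q" if SC: "S \<in> C" "e S = {p, q}" "p \<noteq> q" for S p q
  proof -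
    obtain g where g: "g \<in> S" "e S = g \<inter> r" using e_prop[OF SC(1)] by blast
    have "p \<in> g" "q \<in> g" using g SC(2) by auto
    then show ?thesis
      using less.hyps[of S g p q] SC_props[OF SC(1)] sconnS[OF SC(1)] g(1) SC(3) by blast
  qed
  define CX where "CX = {S\<in>C. e S = {a, b}}"
  define CY where "CY = {S\<in>C. e S = {b, c}}"
  define CZ where "CZ = {S\<in>C. e S = {c, a}}"
  have bX: "bund (\<Union>CX) a b"
    by (rule bund_fold) (use finC disj goodS abc in \<open>auto simp: CX_def\<close>)
  have bY: "bund (\<Union>CY) b c"
    by (rule bund_fold) (use finC disj goodS abc in \<open>auto simp: CY_def\<close>)
  have bZ: "bund (\<Union>CZ) c a"
    by (rule bund_fold) (use finC disj goodS abc in \<open>auto simp: CZ_def\<close>)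
  have neq: "{a, b} \<noteq> {b, c}" "{b, c} \<noteq> {c, a}" "{a, b} \<noteq> {c, a}"
    using abc by (auto simp: doubleton_eq_iff)
  have dXY: "\<Union>CX \<inter> \<Union>CY = {}"
  proof -
    have "S \<inter> S' = {}" if "S \<in> CX" "S' \<in> CY" for S S'
    proof -
      have SC: "S \<in> C" "S' \<in> C" "e S = {a, b}" "e S' = {b, c}" using that unfolding CX_def CY_def by auto
      then have "S \<noteq> S'" using neq by auto
      then show ?thesis using disj SC(1,2) by blast
    qed
    then show ?thesis by blast
  qed
  have dYZ: "\<Union>CY \<inter> \<Union>CZ = {}"
  proof -
    have "S \<inter> S' = {}" if "S \<in> CY" "S' \<in> CZ" for S S'
    proof -
      have SC: "S \<in> C" "S' \<in> C" "e S = {b, c}" "e S' = {c, a}" using that unfolding CY_def CZ_def by auto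
      then have "S \<noteq> S'" using neq by auto
      then show ?thesis using disj SC(1,2) by blast
    qed
    then show ?thesis by blast
  qed
  have dXZ: "\<Union>CX \<inter> \<Union>CZ = {}"
  proof -
    have "S \<inter> S' = {}" if "S \<in> CX" "S' \<in> CZ" for S S'
    proof -
      have SC: "S \<in> C" "S' \<in> C" "e S = {a, b}" "e S' = {c, a}" using that unfolding CX_def CZ_def by auto
      then have "S \<noteq> S'" using neq by auto
      then show ?thesis using disj SC(1,2) by blast
    qed
    then show ?thesis by blast
  qed
  have sub: "\<Union>CX \<subseteq> T'" "\<Union>CY \<subseteq> T'" "\<Union>CZ \<subseteq> T'" using UC unfolding CX_def CY_def CZ_def by auto
  have rn: "r \<notin> \<Union>CX" "r \<notin> \<Union>CY" "r \<notin> \<Union>CZ" using sub unfolding T'_def by auto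
  have Teq: "T = {r} \<union> \<Union>CX \<union> \<Union>CY \<union> \<Union>CZ"
  proof -
    have "C = CX \<union> CY \<union> CZ" using e_cases unfolding CX_def CY_def CZ_def by auto
    then have "T' = \<Union>CX \<union> \<Union>CY \<union> \<Union>CZ" using UC by auto
    then show ?thesis unfolding T'_def using rT by auto
  qed
  have ra: "a \<in> r" "b \<in> r" "c \<in> r" using rc by auto
  show ?case
    using assemble[OF ra abc bX bY bZ dXY dYZ dXZ rn] Teq by simp
qed



definition Kset :: "('v::finite) set \<Rightarrow> (real^'v) set" where
  "Kset f = {x. (\<forall>i. i \<notin> f \<longrightarrow> x $ i = 0) \<and> sum (\<lambda>i. x $ i) UNIV = 1}"

lemma convex_Kset: "convex (Kset f)"
  unfolding convex_def Kset_def
proof (intro ballI allI impI, simp only: mem_Collect_eq, intro conjI allI impI)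
  fix x y :: "real^'a" and u v :: real and i
  assume x: "(\<forall>i. i \<notin> f \<longrightarrow> x $ i = 0) \<and> (\<Sum>i\<in>UNIV. x $ i) = 1"
    and y: "(\<forall>i. i \<notin> f \<longrightarrow> y $ i = 0) \<and> (\<Sum>i\<in>UNIV. y $ i) = 1"
    and uv: "0 \<le> u" "0 \<le> v" "u + v = 1"
  show "i \<notin> f \<Longrightarrow> (u *\<^sub>R x + v *\<^sub>R y) $ i = 0" using x y by simp
  have "(\<Sum>i\<in>UNIV. (u *\<^sub>R x + v *\<^sub>R y) $ i) = u * (\<Sum>i\<in>UNIV. x $ i) + v * (\<Sum>i\<in>UNIV. y $ i)"
    by (simp add: sum.distrib sum_distrib_left)
  then show "(\<Sum>i\<in>UNIV. (u *\<^sub>R x + v *\<^sub>R y) $ i) = 1" using x y uv by simp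
qed

lemma axis_comp: "axis v (1::real) $ i = (if i = v then 1 else 0)"
  unfolding axis_def by simp

lemma axis_in_Kset: "v \<in> f \<Longrightarrow> axis v (1::real) \<in> Kset f"
  unfolding Kset_def by (auto simp: axis_comp)

lemma hull_Kset: "convex hull ((\<lambda>v. axis v (1::real)) ` f) \<subseteq> Kset f"
  by (rule hull_minimal) (auto simp: axis_in_Kset convex_Kset)

lemma hull_inter:
  fixes f g :: "('v::finite) set"
  assumes "card (f \<inter> g) \<le> 1"
    and x: "x \<in> convex hull ((\<lambda>v. axis v (1::real)) ` f)" "x \<in> convex hull ((\<lambda>v. axis v (1::real)) ` g)"
  shows "\<exists>v\<in>f \<inter> g. x = axis v 1"
proof -
  have xf: "x \<in> Kset f" and xg: "x \<in> Kset g" using x hull_Kset by blast+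
  have z: "x $ i = 0" if "i \<notin> f \<inter> g" for i using xf xg that unfolding Kset_def by auto
  have s: "sum (\<lambda>i. x $ i) UNIV = 1" using xf unfolding Kset_def by auto
  have fi: "finite (f \<inter> g)" by simp
  consider "card (f \<inter> g) = 0" | "card (f \<inter> g) = 1" using assms by linarith
  then consider "f \<inter> g = {}" | v where "f \<inter> g = {v}"
  proof cases
    case 1 then show ?thesis using fi that(1) by simp
  next
    case 2
    then obtain v where "f \<inter> g = {v}" by (rule card_1_singletonE)
    then show ?thesis using that(2) by blast
  qed
  then show ?thesis
  proof cases
    case 1
    then have "sum (\<lambda>i. x $ i) UNIV = 0" using z by simp
    then show ?thesis using s by simp
  next
    case 2
    have "sum (\<lambda>i. x $ i) UNIV = x $ v"
      using z 2 by (subst sum.remove[of UNIV v]) auto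
    then have xv: "x $ v = 1" using s by simp
    have "x = axis v 1" unfolding vec_eq_iff using xv z 2 by (auto simp: axis_comp)
    then show ?thesis using 2 by auto
  qed
qed

lemma realization_empty: "realization {} = {}"
  unfolding realization_def by simp


lemma aff2: "aff_dim (cball (0::real^2) 1) = 2"
  by (simp add: aff_dim_cball)
lemma conn_ball_minus:
  fixes Q :: "(real^2) set"
  assumes "finite Q"
  shows "connected (cball (0::real^2) 1 - Q)"
proof (rule connected_convex_diff_countable)
  show "convex (cball (0::real^2) 1)" by simp
  show "\<not> collinear (cball (0::real^2) 1)" using aff2 by (simp add: collinear_aff_dim)
  show "countable Q" using assms by (rule countable_finite)
qed

lemma homeo_img:
  assumes hg: "homeomorphism S T h g" and PS: "P \<subseteq> S"
  shows "g ` (T - h ` P) = S - P"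
proof -
  have a: "\<forall>x\<in>S. g (h x) = x" "h ` S = T" "\<forall>y\<in>T. h (g y) = y" "g ` T = S"
    using hg unfolding homeomorphism_def by auto
  show ?thesis
  proof (intro equalityI subsetI)
    fix y assume "y \<in> g ` (T - h ` P)"
    then obtain z where z: "z \<in> T" "z \<notin> h ` P" "y = g z" by blast
    have yS: "y \<in> S" using a(4) z by blast
    have "y \<notin> P"
    proof
      assume "y \<in> P"
      moreover have "h y = z" using a(3) z by simp
      ultimately show False using z(2) by blast
    qed
    then show "y \<in> S - P" using yS by blast
  next
    fix y assume y: "y \<in> S - P"
    have hy: "h y \<in> T" using a(2) y by blast
    have "h y \<notin> h ` P"
    proof
      assume "h y \<in> h ` P"
      then obtain p where p: "p \<in> P" "h y = h p" by blast
      have "y = g (h y)" using a(1) y by simp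
      also have "\<dots> = g (h p)" using p by simp
      also have "\<dots> = p" using a(1) p PS by blast
      finally show False using p y by blast
    qed
    moreover have "g (h y) = y" using a(1) y by simp
    ultimately show "y \<in> g ` (T - h ` P)" using hy by (metis DiffI image_eqI)
  qed
qed

lemma homeo_conn:
  assumes hg: "homeomorphism S T h g" and PS: "P \<subseteq> S" and c: "connected (T - h ` P)"
  shows "connected (S - P)"
proof -
  have "continuous_on T g" using hg unfolding homeomorphism_def by blast
  then have "continuous_on (T - h ` P) g" by (rule continuous_on_subset) blast
  then have "connected (g ` (T - h ` P))" using c by (rule connected_continuous_image)
  then show ?thesis using homeo_img[OF hg PS] by simp
qed
lemma realization_closed:
  fixes A :: "('v::finite) set set"
  assumes "finite A"
  shows "closed (realization A)"
  unfolding realization_def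
  using assms by (intro closed_UN) (auto simp: compact_imp_closed compact_convex_hull finite_imp_compact)

lemma mid_point:
  fixes f :: "('v::finite) set"
  assumes "card f = 3"
  shows "\<exists>x\<in>convex hull ((\<lambda>v. axis v (1::real)) ` f). x \<notin> range (\<lambda>v. axis v (1::real))"
proof -
  obtain v w where vw: "v \<in> f" "w \<in> f" "v \<noteq> w"
    using assms by (metis card_3_iff insertCI)
  define m where "m = (1/2) *\<^sub>R axis v (1::real) + (1/2) *\<^sub>R axis w (1::real)"
  have "m \<in> convex hull ((\<lambda>v. axis v (1::real)) ` f)" unfolding m_def
    by (rule convexD) (auto intro: hull_inc simp: vw)
  moreover have "m \<notin> range (\<lambda>v. axis v (1::real))"
  proof
    assume "m \<in> range (\<lambda>v. axis v (1::real))"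
    then obtain u where "m = axis u 1" by blast
    then have "m $ v = axis u (1::real) $ v" by simp
    then show False unfolding m_def using vw by (auto simp: axis_comp split: if_splits)
  qed
  ultimately show ?thesis by blast
qed

lemma topo_sconn:
  fixes F :: "('v::finite) set set"
  assumes "triangulated_polygon_no_interior F"
  shows "sconn F \<and> F \<noteq> {}"
proof -
  obtain h g where hg: "homeomorphism (realization F) (cball (0::real^2) 1) h g"
    using assms unfolding triangulated_polygon_no_interior_def by blast
  have fin: "finite F" and c3: "\<forall>f\<in>F. card f = 3"
    using assms unfolding triangulated_polygon_no_interior_def by auto
  have Fne: "F \<noteq> {}"
  proof
    assume F0: "F = {}"
    have "h ` realization F = cball (0::real^2) 1" using hg unfolding homeomorphism_def by blast
    then have "cball (0::real^2) 1 = {}" using F0 realization_empty by (metis image_empty)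
    moreover have "(0::real^2) \<in> cball 0 1" by simp
    ultimately show False by blast
  qed
  define ax where "ax = (\<lambda>v::'v. axis v (1::real))"
  define P where "P = ax ` verts F"
  define H where "H f = convex hull (ax ` f)" for f
  have realH: "realization A = (\<Union>f\<in>A. H f)" for A unfolding realization_def H_def ax_def by simp
  have PR: "P \<subseteq> realization F"
    unfolding P_def realH verts_def H_def by (auto intro: hull_inc)
  have finP: "finite (h ` P)" unfolding P_def by simp
  have conn: "connected (realization F - P)"
    using homeo_conn[OF hg PR conn_ball_minus[OF finP]] .
  have closedR: "closed (realization A)" if "A \<subseteq> F" for A
    using realization_closed[of A] fin that finite_subset by blast
  have mid: "\<exists>x\<in>H f. x \<notin> P" if fF: "f \<in> F" for f
  proof -
    obtain x where x: "x \<in> H f" "x \<notin> range ax"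
      using mid_point[of f] c3 fF unfolding H_def ax_def by blast
    moreover have "P \<subseteq> range ax" unfolding P_def by blast
    ultimately show ?thesis by blast
  qed
  have "sconn F"
  proof (rule ccontr)
    assume "\<not> sconn F"
    then obtain f0 g0 where fg: "f0 \<in> F" "g0 \<in> F" "(f0, g0) \<notin> (adjR F)\<^sup>*"
      unfolding sconn_def by blast
    define A where "A = {g \<in> F. (f0, g) \<in> (adjR F)\<^sup>*}"
    define B where "B = F - A"
    have AF: "A \<subseteq> F" and BF: "B \<subseteq> F" unfolding A_def B_def by auto
    have f0A: "f0 \<in> A" unfolding A_def using fg by simp
    have g0B: "g0 \<in> B" unfolding A_def B_def using fg by simp
    have noadj: "card (f \<inter> g) \<noteq> 2" if "f \<in> A" "g \<in> B" for f g
    proof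
      assume "card (f \<inter> g) = 2"
      then have "(f, g) \<in> adjR F" using that AF BF unfolding adjR_def by auto
      moreover have "(f0, f) \<in> (adjR F)\<^sup>*" using that(1) unfolding A_def by simp
      ultimately have "(f0, g) \<in> (adjR F)\<^sup>*" by (simp add: rtrancl_into_rtrancl)
      then show False using that unfolding A_def B_def by auto
    qed
    have small: "card (f \<inter> g) \<le> 1" if "f \<in> A" "g \<in> B" for f g
    proof -
      have fne: "f \<noteq> g" using that unfolding B_def by auto
      have cf: "card f = 3" "card g = 3" using that AF BF c3 by auto
      have ff: "finite f" "finite g" by simp_all
      have "card (f \<inter> g) \<le> 3" using card_mono[OF ff(1), of "f \<inter> g"] cf by simp
      moreover have "card (f \<inter> g) \<noteq> 3"
      proof
        assume h3: "card (f \<inter> g) = 3"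
        have "f \<inter> g = f" using card_subset_eq[OF ff(1), of "f \<inter> g"] h3 cf by simp
        moreover have "f \<inter> g = g" using card_subset_eq[OF ff(2), of "f \<inter> g"] h3 cf by simp
        ultimately show False using fne by simp
      qed
      ultimately show ?thesis using noadj[OF that] by linarith
    qed
    have RF: "realization F = realization A \<union> realization B"
      unfolding realH A_def B_def by blast
    have "\<not> connected (realization F - P)"
      unfolding connected_closed
    proof (intro notI, elim notE, rule exI[of _ "realization A"], rule exI[of _ "realization B"], intro conjI)
      show "closed (realization A)" using closedR AF by blast
      show "closed (realization B)" using closedR BF by blast
      show "realization F - P \<subseteq> realization A \<union> realization B" using RF by blast
      show "realization A \<inter> realization B \<inter> (realization F - P) = {}"
      proof (rule ccontr)
        assume "realization A \<inter> realization B \<inter> (realization F - P) \<noteq> {}"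
        then obtain x f g where x: "f \<in> A" "g \<in> B" "x \<in> H f" "x \<in> H g" "x \<notin> P"
          unfolding realH by blast
        obtain v where v: "v \<in> f \<inter> g" "x = axis v 1"
          using hull_inter[OF small[OF x(1,2)]] x(3,4) unfolding H_def ax_def by blast
        have "v \<in> verts F" using v x(1) AF unfolding verts_def by blast
        then have "x \<in> P" unfolding P_def ax_def using v by blast
        then show False using x by blast
      qed
      show "realization A \<inter> (realization F - P) \<noteq> {}"
        using mid[of f0] f0A AF RF unfolding realH by blast
      show "realization B \<inter> (realization F - P) \<noteq> {}"
        using mid[of g0] g0B BF RF unfolding realH by blast
    qed
    then show False using conn by blast
  qed
  then show ?thesis using Fne by blast
qed


lemma good_tr:
  assumes "good T a b"
  shows "\<exists>x y. tr T x y"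
proof -
  consider "tr T a b" | "splt T a b" using assms unfolding good_def by blast
  then show ?thesis
  proof cases
    case 1 then show ?thesis by blast
  next
    case 2
    then show ?thesis using splt_loop[OF 2] by blast
  qed
qed

theorem mainTheorem5:
  fixes F :: "('v::finite) set set"
  assumes "triangulated_polygon_no_interior F"
  shows "(\<exists>Vs S. scaffold F Vs S \<and> connected_subgraph F Vs S) \<and>
         (\<exists>vs fs. facet_path F vs fs)"
proof -
  have sc: "sconn F" and Fne: "F \<noteq> {}" using topo_sconn[OF assms] by auto
  have fin: "finite F" and c3: "\<forall>f\<in>F. card f = 3"
    using assms unfolding triangulated_polygon_no_interior_def by auto
  obtain r where rF: "r \<in> F" using Fne by blast
  have "card r = 3" using c3 rF by blast
  then obtain a b where ab: "a \<in> r" "b \<in> r" "a \<noteq> b"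
    by (metis card_3_iff insertCI)
  have "good F a b" using main_good[OF fin c3 sc rF ab] .
  then obtain x y where "tr F x y" using good_tr[of F a b] by blast
  then obtain vs fs where w: "walk vs fs" "distinct fs" "set fs = F"
    unfolding tr_def by blast
  show ?thesis
    using walk_scaffold[OF w Fne] walk_facet_path[OF w] by blast
qed

end
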